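(* Let $k\in\mathbb{N}$, $p\in[1,\infty]$, and $\alpha,\beta\ge 0$. Any algorithm that is a $(k,p,\alpha,\beta)$-coreset estimator is an $(\mathcal{F}^{\mathrm{coreset}}_{p,k}, 4\alpha+\beta)$-accurate sanitizer.
   Context: Let $\mathbb{B}_{p,d}=\{x\in\mathbb{R}^d:\|x\|_p\le 1\}$. For $\mathcal{C}\in\mathbb{B}_{p,d}^k$ and $x\in\mathbb{B}_{p,d}$, $\mathrm{cost}_{\mathcal{C},p}(x)=\min_{c\in\mathcal{C}}\|x-c\|_p^2$; for a query $f$ and dataset $D$ (finite tuple of points), $f(D)=\mathbb{E}_{x\sim D}[f(x)]$ (average over points of $D$). A dataset $\tilde D \in \mathbb{B}_{p,d}^*$ (of any size) is a $(k,p,\alpha,\beta)$-coreset of $D \in \mathbb{B}_{p,d}^*$ if for all $\mathcal{C}\in\mathbb{B}_{p,d}^k$, $(1-\alpha)\,\mathrm{cost}_{\mathcal{C},p}(D) - \beta \le \mathrm{cost}_{\mathcal{C},p}(\tilde D) \le (1+\alpha)\,\mathrm{cost}_{\mathcal{C},p}(D) + \beta$. An algorithm $\mathcal{A}$ is a $(k,p,\alpha,\beta,d,n)$-coreset estimator if for every $D\in\mathbb{B}_{p,d}^n$, with probability at least $2/3$, $\mathcal{A}(D)$ is a $(k,p,\alpha,\beta)$-coreset of $D$; it is a $(k,p,\alpha,\beta)$-coreset estimator if there is a constant $\nu>0$ such that for all $d\in\mathbb{N}$ and $n\ge\Theta(d^\nu)$ it is a $(k,p,\alpha,\beta,d,n)$-coreset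 estimator. A sanitizer maps datasets to datasets. For a family $\mathcal{F}$ of queries, $\tilde D$ is an $(\mathcal{F},a)$-accurate estimate of $D$ if $|f(\tilde D)-f(D)|\le a$ for all $f\in\mathcal{F}$; a sanitizer is $(\mathcal{F},a,n)$-accurate if for every $D\in\mathcal{X}^n$, with probability at least $2/3$ its output is an $(\mathcal{F},a)$-accurate estimate of $D$. With $\mathcal{F}^{\mathrm{coreset}}_{p,d,k}=\{\mathrm{cost}_{\mathcal{C},p}:\mathcal{C}\in\mathbb{B}_{p,d}^k\}$ and $\mathcal{F}^{\mathrm{coreset}}_{p,k}=\bigcup_d\mathcal{F}^{\mathrm{coreset}}_{p,d,k}$, a sanitizer is $(\mathcal{F}^{\mathrm{coreset}}_{p,k},a)$-accurate if there is a constant $\nu>0$ such that for all $d\in\mathbb{N}$ and $n\ge\Theta(d^\nu)$ it is $(\mathcal{F}^{\mathrm{coreset}}_{p,d,k},a,n)$-accurate. *)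

theory Defs
  imports "HOL-Probability.Probability_Mass_Function" "HOL-Library.Extended_Real"
begin

text \<open>Points of \<real>^d are lists of reals of length d; a dataset is a list of points
  (a finite tuple). The exponent p ranges over [1, \<infinity>], modelled as an ereal.\<close>

definition pnorm :: "ereal \<Rightarrow> real list \<Rightarrow> real" where
  "pnorm p x = (if p = \<infinity> then foldr max (map abs x) 0
                else (\<Sum>a\<leftarrow>x. \<bar>a\<bar> powr real_of_ereal p) powr (1 / real_of_ereal p))"

definition pball :: "ereal \<Rightarrow> nat \<Rightarrow> real list set" where
  "pball p d = {x. length x = d \<and> pnorm p x \<le> 1}"

definition cost :: "ereal \<Rightarrow> real list list \<Rightarrow> real list \<Rightarrow> real" where
  "cost p C x = Min ((\<lambda>c. (pnorm p (map2 (-) x c))\<^sup>2) ` set C)"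

text \<open>f(D) = average of f over the points of D (0 for the empty dataset).\<close>
definition avg :: "(real list \<Rightarrow> real) \<Rightarrow> real list list \<Rightarrow> real" where
  "avg f D = (\<Sum>x\<leftarrow>D. f x) / real (length D)"

definition centers :: "nat \<Rightarrow> ereal \<Rightarrow> nat \<Rightarrow> real list list set" where
  "centers k p d = {C. length C = k \<and> set C \<subseteq> pball p d}"

definition is_coreset ::
  "nat \<Rightarrow> ereal \<Rightarrow> real \<Rightarrow> real \<Rightarrow> nat \<Rightarrow> real list list \<Rightarrow> real list list \<Rightarrow> bool" where
  "is_coreset k p \<alpha> \<beta> d D' D \<longleftrightarrow> set D' \<subseteq> pball p d \<and>
     (\<forall>C \<in> centers k p d.
        (1 - \<alpha>) * avg (cost p C) D - \<beta> \<le> avg (cost p C) D' \<and>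
        avg (cost p C) D' \<le> (1 + \<alpha>) * avg (cost p C) D + \<beta>)"

type_synonym algorithm = "real list list \<Rightarrow> real list list pmf"

definition coreset_estimator_dn ::
  "algorithm \<Rightarrow> nat \<Rightarrow> ereal \<Rightarrow> real \<Rightarrow> real \<Rightarrow> nat \<Rightarrow> nat \<Rightarrow> bool" where
  "coreset_estimator_dn A k p \<alpha> \<beta> d n \<longleftrightarrow>
     (\<forall>D. length D = n \<and> set D \<subseteq> pball p d \<longrightarrow>
        measure_pmf.prob (A D) {D'. is_coreset k p \<alpha> \<beta> d D' D} \<ge> 2/3)"

text \<open>"n \<ge> \<Theta>(d^\<nu>)" is read as: n \<ge> c * d^\<nu> for some constant c > 0.\<close>
definition coreset_estimator :: "algorithm \<Rightarrow> nat \<Rightarrow> ereal \<Rightarrow> real \<Rightarrow> real \<Rightarrow> bool" where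
  "coreset_estimator A k p \<alpha> \<beta> \<longleftrightarrow>
     (\<exists>\<nu>>0. \<exists>c>0. \<forall>d n. real n \<ge> c * real d powr \<nu> \<longrightarrow> coreset_estimator_dn A k p \<alpha> \<beta> d n)"

definition coreset_queries :: "ereal \<Rightarrow> nat \<Rightarrow> nat \<Rightarrow> (real list \<Rightarrow> real) set" where
  "coreset_queries p d k = {cost p C | C. C \<in> centers k p d}"

definition accurate_estimate ::
  "(real list \<Rightarrow> real) set \<Rightarrow> real \<Rightarrow> real list list \<Rightarrow> real list list \<Rightarrow> bool" where
  "accurate_estimate F a D' D \<longleftrightarrow> (\<forall>f\<in>F. \<bar>avg f D' - avg f D\<bar> \<le> a)"

definition sanitizer_accurate_n ::
  "algorithm \<Rightarrow> real list set \<Rightarrow> (real list \<Rightarrow> real) set \<Rightarrow> real \<Rightarrow> nat \<Rightarrow> bool" where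
  "sanitizer_accurate_n A X F a n \<longleftrightarrow>
     (\<forall>D. length D = n \<and> set D \<subseteq> X \<longrightarrow>
        measure_pmf.prob (A D) {D'. set D' \<subseteq> X \<and> accurate_estimate F a D' D} \<ge> 2/3)"

definition coreset_sanitizer_accurate :: "algorithm \<Rightarrow> ereal \<Rightarrow> nat \<Rightarrow> real \<Rightarrow> bool" where
  "coreset_sanitizer_accurate A p k a \<longleftrightarrow>
     (\<exists>\<nu>>0. \<exists>c>0. \<forall>d n. real n \<ge> c * real d powr \<nu> \<longrightarrow>
        sanitizer_accurate_n A (pball p d) (coreset_queries p d k) a n)"

end

theory Submission
  imports Defs "HOL-Analysis.Analysis"
begin

lemma foldr_max_le:
  assumes "0 \<le> (b::real)"
  shows "(foldr max (map abs xs) 0 \<le> b) = (\<forall>a\<in>set xs. \<bar>a\<bar> \<le> b)"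
  using assms by (induction xs) auto

lemma foldr_max_nonneg: "0 \<le> foldr max (map abs (xs::real list)) 0"
  by (induction xs) (auto simp: le_max_iff_disj)

lemma pt_convex:
  fixes a b p :: real
  assumes "a \<ge> 0" "b \<ge> 0" "p \<ge> 1"
  shows "(a + b) powr p \<le> 2 powr (p - 1) * (a powr p + b powr p)"
proof (cases "a = 0 \<or> b = 0")
  case True
  have "1 \<le> 2 powr (p - 1)" using assms by (intro ge_one_powr_ge_zero) auto
  moreover have "0 \<le> a powr p + b powr p" by simp
  ultimately have "a powr p + b powr p \<le> 2 powr (p - 1) * (a powr p + b powr p)"
    using mult_right_mono[of 1 "2 powr (p - 1)" "a powr p + b powr p"] by simp
  then show ?thesis using True by auto
next
  case False
  then have ab: "a > 0" "b > 0" using assms by auto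
  have "((1/2) *\<^sub>R a + (1 - 1/2) *\<^sub>R b) powr p \<le> (1/2) * a powr p + (1 - 1/2) * b powr p"
    using convex_onD[OF powr_convex[OF assms(3)], of "1/2" a b] ab by simp
  then have h: "((a + b)/2) powr p \<le> (a powr p + b powr p)/2" by (simp add: field_simps)
  have "((a + b)/2) powr p = (a+b) powr p / 2 powr p"
    using ab by (simp add: powr_divide)
  also have "2 powr p = 2 * 2 powr (p - 1)" by (simp add: powr_diff)
  finally have "(a+b) powr p = 2 * 2 powr (p-1) * ((a + b)/2) powr p" by simp
  also have "\<dots> \<le> 2 * 2 powr (p-1) * ((a powr p + b powr p)/2)"
    using h by (intro mult_left_mono) auto
  finally show ?thesis by simp
qed

lemma sum_convex:
  fixes p :: real
  assumes "p \<ge> 1"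
  shows "length x = length c \<Longrightarrow> (\<Sum>a\<leftarrow>map2 (-) x c. \<bar>a\<bar> powr p)
     \<le> 2 powr (p - 1) * ((\<Sum>a\<leftarrow>x. \<bar>a\<bar> powr p) + (\<Sum>a\<leftarrow>c. \<bar>a\<bar> powr p))"
proof (induction x arbitrary: c)
  case Nil then show ?case by simp
next
  case (Cons y x)
  then obtain z c' where c: "c = z # c'" "length x = length c'" by (cases c) auto
  have "\<bar>y - z\<bar> powr p \<le> (\<bar>y\<bar> + \<bar>z\<bar>) powr p"
    using assms by (intro powr_mono2) auto
  also have "\<dots> \<le> 2 powr (p - 1) * (\<bar>y\<bar> powr p + \<bar>z\<bar> powr p)"
    using assms by (intro pt_convex) auto
  finally have "\<bar>y - z\<bar> powr p \<le> 2 powr (p - 1) * (\<bar>y\<bar> powr p + \<bar>z\<bar> powr p)" .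
  with Cons.IH[OF c(2)] show ?case using c by (simp add: algebra_simps)
qed

lemma sum_pow_nonneg: "0 \<le> (\<Sum>a\<leftarrow>(ys::real list). \<bar>a\<bar> powr q)"
  by (induction ys) auto

lemma sum_le1:
  fixes p :: real
  assumes "p \<ge> 1" "(\<Sum>a\<leftarrow>x. \<bar>a\<bar> powr p) powr (1 / p) \<le> 1"
  shows "(\<Sum>a\<leftarrow>x. \<bar>a\<bar> powr p) \<le> 1"
proof -
  let ?S = "(\<Sum>a\<leftarrow>x. \<bar>a\<bar> powr p)"
  have S0: "?S \<ge> 0" by (induction x) auto
  have "?S = (?S powr (1/p)) powr p" using S0 assms(1) by (simp add: powr_powr)
  also have "\<dots> \<le> 1 powr p" using assms by (intro powr_mono2) auto
  finally show ?thesis by simp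
qed

lemma pnorm_diff_le2:
  assumes "1 \<le> p" "x \<in> pball p d" "c \<in> pball p d"
  shows "pnorm p (map2 (-) x c) \<le> 2"
proof (cases "p = \<infinity>")
  case True
  have lx: "length x = length c" using assms by (simp add: pball_def)
  have "\<forall>a\<in>set x. \<bar>a\<bar> \<le> 1" "\<forall>a\<in>set c. \<bar>a\<bar> \<le> 1"
    using assms True by (auto simp: pball_def pnorm_def foldr_max_le)
  then have "\<forall>a\<in>set (map2 (-) x c). \<bar>a\<bar> \<le> 2"
  proof (clarsimp simp: set_zip)
    fix i assume a: "\<forall>a\<in>set x. \<bar>a\<bar> \<le> 1" "\<forall>a\<in>set c. \<bar>a\<bar> \<le> 1" "i < length x" "i < length c"
    then have "\<bar>x ! i\<bar> \<le> 1" "\<bar>c ! i\<bar> \<le> 1" by (auto intro: nth_mem)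
    then show "\<bar>x ! i - c ! i\<bar> \<le> 2" by linarith
  qed
  then have "foldr max (map abs (map2 (-) x c)) 0 \<le> 2"
    using foldr_max_le[of 2 "map2 (-) x c", OF zero_le_numeral] by (simp only:)
  then show ?thesis using True by (simp add: pnorm_def)
next
  case False
  define q where "q = real_of_ereal p"
  have q1: "q \<ge> 1" using assms(1) False unfolding q_def
    by (cases p) auto
  have lx: "length x = length c" using assms by (simp add: pball_def)
  have hx: "(\<Sum>a\<leftarrow>x. \<bar>a\<bar> powr q) \<le> 1" "(\<Sum>a\<leftarrow>c. \<bar>a\<bar> powr q) \<le> 1"
    using assms False q1 by (auto simp: pball_def pnorm_def q_def intro!: sum_le1)
  have "(\<Sum>a\<leftarrow>map2 (-) x c. \<bar>a\<bar> powr q) \<le> 2 powr (q - 1) * 2"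
  proof -
    have "(\<Sum>a\<leftarrow>x. \<bar>a\<bar> powr q) + (\<Sum>a\<leftarrow>c. \<bar>a\<bar> powr q) \<le> 2" using hx by linarith
    then have "2 powr (q - 1) * ((\<Sum>a\<leftarrow>x. \<bar>a\<bar> powr q) + (\<Sum>a\<leftarrow>c. \<bar>a\<bar> powr q)) \<le> 2 powr (q - 1) * 2"
      by (intro mult_left_mono) auto
    then show ?thesis using sum_convex[OF q1 lx] by linarith
  qed
  also have "\<dots> = 2 powr q" by (simp add: powr_diff)
  finally have S: "(\<Sum>a\<leftarrow>map2 (-) x c. \<bar>a\<bar> powr q) \<le> 2 powr q" .
  have "(\<Sum>a\<leftarrow>map2 (-) x c. \<bar>a\<bar> powr q) powr (1/q) \<le> (2 powr q) powr (1/q)"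
    using q1 S sum_pow_nonneg[where ys="map2 (-) x c" and q=q] by (intro powr_mono2) auto
  also have "\<dots> = 2" using q1 by (simp add: powr_powr)
  finally show ?thesis using False by (simp add: pnorm_def q_def)
qed

lemma cost_le4:
  assumes "1 \<le> p" "k \<ge> 1" "C \<in> centers k p d" "x \<in> pball p d"
  shows "cost p C x \<le> 4" "cost p C x \<ge> 0"
proof -
  from assms have "C \<noteq> []" by (auto simp: centers_def)
  then obtain c where c: "c \<in> set C" by (cases C) auto
  then have "c \<in> pball p d" using assms by (auto simp: centers_def)
  then have n: "pnorm p (map2 (-) x c) \<le> 2" using pnorm_diff_le2 assms by blast
  have n0: "pnorm p (map2 (-) x c) \<ge> 0"
    using foldr_max_nonneg[of "map2 (-) x c"] by (simp add: pnorm_def)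
  have sq: "(pnorm p (map2 (-) x c))\<^sup>2 \<le> 2\<^sup>2"
    using n n0 by (intro power_mono) auto
  show "cost p C x \<le> 4" unfolding cost_def
    by (rule order_trans[OF Min_le]) (use c sq in auto)
  show "cost p C x \<ge> 0" unfolding cost_def using c by (subst Min_ge_iff) auto
qed

lemma avg_bound:
  assumes "\<And>x. x \<in> set D \<Longrightarrow> 0 \<le> f x \<and> f x \<le> 4"
  shows "0 \<le> avg f D" "avg f D \<le> 4"
proof -
  have s: "sum_list (map f D) \<le> 4 * real (length D)" "0 \<le> sum_list (map f D)"
  proof -
    have "sum_list (map f D) \<le> sum_list (map (\<lambda>_. 4) D)"
      using assms by (intro sum_list_mono) auto
    then show "sum_list (map f D) \<le> 4 * real (length D)" by (simp add: sum_list_triv)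
    show "0 \<le> sum_list (map f D)" using assms by (intro sum_list_nonneg) auto
  qed
  then show "0 \<le> avg f D" by (simp add: avg_def)
  show "avg f D \<le> 4"
  proof (cases "D = []")
    case True then show ?thesis by (simp add: avg_def)
  next
    case False
    then show ?thesis using s by (simp add: avg_def divide_le_eq mult.commute)
  qed
qed

theorem mainTheorem5:
  fixes A :: algorithm and k :: nat and p :: ereal and \<alpha> \<beta> :: real
  assumes "k \<ge> 1" and "1 \<le> p" and "\<alpha> \<ge> 0" and "\<beta> \<ge> 0"
    and "coreset_estimator A k p \<alpha> \<beta>"
  shows "coreset_sanitizer_accurate A p k (4 * \<alpha> + \<beta>)"
proof -
  obtain \<nu> c where nc: "\<nu> > 0" "c > 0"
    "\<And>d n. real n \<ge> c * real d powr \<nu> \<Longrightarrow> coreset_estimator_dn A k p \<alpha> \<beta> d n"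
    using assms(5) unfolding coreset_estimator_def by blast
  have "sanitizer_accurate_n A (pball p d) (coreset_queries p d k) (4 * \<alpha> + \<beta>) n"
    if "real n \<ge> c * real d powr \<nu>" for d n
  proof -
    have est: "coreset_estimator_dn A k p \<alpha> \<beta> d n" using nc(3) that .
    show ?thesis unfolding sanitizer_accurate_n_def
    proof (intro allI impI)
      fix D :: "real list list"
      assume D: "length D = n \<and> set D \<subseteq> pball p d"
      have sub: "{D'. is_coreset k p \<alpha> \<beta> d D' D} \<subseteq>
        {D'. set D' \<subseteq> pball p d \<and> accurate_estimate (coreset_queries p d k) (4 * \<alpha> + \<beta>) D' D}"
      proof
        fix D' assume "D' \<in> {D'. is_coreset k p \<alpha> \<beta> d D' D}"
        then have cs: "is_coreset k p \<alpha> \<beta> d D' D" by simp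
        have s: "set D' \<subseteq> pball p d" using cs by (simp add: is_coreset_def)
        have "accurate_estimate (coreset_queries p d k) (4 * \<alpha> + \<beta>) D' D"
          unfolding accurate_estimate_def
        proof
          fix f assume "f \<in> coreset_queries p d k"
          then obtain C where fC: "f = cost p C" and C: "C \<in> centers k p d"
            by (auto simp: coreset_queries_def)
          have b: "0 \<le> avg (cost p C) D" "avg (cost p C) D \<le> 4"
            using D cost_le4[OF assms(2) assms(1) C] by (auto intro!: avg_bound)
          have ineq: "(1 - \<alpha>) * avg (cost p C) D - \<beta> \<le> avg (cost p C) D'"
            "avg (cost p C) D' \<le> (1 + \<alpha>) * avg (cost p C) D + \<beta>"
            using cs C by (auto simp: is_coreset_def)
          have "\<alpha> * avg (cost p C) D \<le> \<alpha> * 4" using b assms(3) by (intro mult_left_mono) auto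
          then show "\<bar>avg f D' - avg f D\<bar> \<le> 4 * \<alpha> + \<beta>"
            using ineq fC by (simp add: algebra_simps abs_le_iff)
        qed
        then show "D' \<in> {D'. set D' \<subseteq> pball p d \<and> accurate_estimate (coreset_queries p d k) (4 * \<alpha> + \<beta>) D' D}"
          using s by simp
      qed
      have "2/3 \<le> measure_pmf.prob (A D) {D'. is_coreset k p \<alpha> \<beta> d D' D}"
        using est D unfolding coreset_estimator_dn_def by blast
      also have "\<dots> \<le> measure_pmf.prob (A D)
        {D'. set D' \<subseteq> pball p d \<and> accurate_estimate (coreset_queries p d k) (4 * \<alpha> + \<beta>) D' D}"
        using sub by (intro measure_pmf.finite_measure_mono) auto
      finally show "2/3 \<le> measure_pmf.prob (A D)
        {D'. set D' \<subseteq> pball p d \<and> accurate_estimate (coreset_queries p d k) (4 * \<alpha> + \<beta>) D' D}" .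
    qed
  qed
  then show ?thesis unfolding coreset_sanitizer_accurate_def using nc(1,2) by blast
qed

end
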